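(* Let $n\ge 2$ be an integer, let $a_1,\dots,a_n>0$ with $\sum_{k=1}^n a_k=1$, and let $c_k,d_k,\beta_k\in\mathbb{R}$ ($k=1,\dots,n$) with $\max_{1\le k\le n}|d_k|<1$. Put $\alpha_1=0$, $\alpha_k=\sum_{j=1}^{k-1}a_j$ for $k=2,\dots,n+1$, and $S_k(x)=a_kx+\alpha_k$. Let $f\in C[0;1]$ be a continuous function satisfying $f=G(f)$, where $$[G(f)](t)=\sum_{k=1}^n\bigl(d_k f(S_k^{-1}(t))+c_k t+\beta_k\bigr)\chi_{I_k}(t),\qquad I_1=[0;\alpha_2],\ I_k=(\alpha_k;\alpha_{k+1}]\ (k\ge2).$$ Suppose $|d_i|<a_i$ for all $i=1,\dots,n$. Then $f$ satisfies the Hölder condition for every exponent $\alpha\in(0;1]$; in particular $f$ is Lipschitz: there is $C\ge0$ with $|f(x)-f(y)|\le C|x-y|$ for all $x,y\in[0;1]$.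
   Context: Here $\chi_I$ is the indicator function of the interval $I$. A continuous function $f$ with $G(f)=f$ is called an (affine) self-similar function with self-similarity parameters $\{a_k\},\{c_k\},\{d_k\},\{\beta_k\}$. A function $f$ on $[0;1]$ satisfies the Hölder condition with exponent $\alpha\in(0;1]$ if $\sup_{x\ne y}|f(x)-f(y)|/|x-y|^\alpha<\infty$. *)

theory Defs
  imports "HOL-Analysis.Analysis"
begin

definition alpha_pt :: "(nat \<Rightarrow> real) \<Rightarrow> nat \<Rightarrow> real" where
  "alpha_pt a k = (\<Sum>j=1..<k. a j)"

definition S_map :: "(nat \<Rightarrow> real) \<Rightarrow> nat \<Rightarrow> real \<Rightarrow> real" where
  "S_map a k x = a k * x + alpha_pt a k"

definition S_inv :: "(nat \<Rightarrow> real) \<Rightarrow> nat \<Rightarrow> real \<Rightarrow> real" where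
  "S_inv a k t = (t - alpha_pt a k) / a k"

definition I_int :: "(nat \<Rightarrow> real) \<Rightarrow> nat \<Rightarrow> real set" where
  "I_int a k = (if k = 1 then {0..alpha_pt a 2} else {alpha_pt a k<..alpha_pt a (Suc k)})"

definition G_op :: "nat \<Rightarrow> (nat \<Rightarrow> real) \<Rightarrow> (nat \<Rightarrow> real) \<Rightarrow> (nat \<Rightarrow> real) \<Rightarrow> (nat \<Rightarrow> real)
    \<Rightarrow> (real \<Rightarrow> real) \<Rightarrow> real \<Rightarrow> real" where
  "G_op n a c d \<beta> f t =
     (\<Sum>k=1..n. (d k * f (S_inv a k t) + c k * t + \<beta> k) * indicator (I_int a k) t)"

definition holder_on :: "real \<Rightarrow> real set \<Rightarrow> (real \<Rightarrow> real) \<Rightarrow> bool" where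
  "holder_on \<alpha> A f \<longleftrightarrow> (\<exists>C. \<forall>x\<in>A. \<forall>y\<in>A. x \<noteq> y \<longrightarrow> \<bar>f x - f y\<bar> / \<bar>x - y\<bar> powr \<alpha> \<le> C)"

end

theory Submission
  imports Defs
begin

context
  fixes n :: nat and a c d \<beta> :: "nat \<Rightarrow> real" and f :: "real \<Rightarrow> real"
  assumes n2: "n \<ge> 2" and apos: "\<forall>k\<in>{1..n}. a k > 0" and asum: "(\<Sum>k=1..n. a k) = 1"
    and fcont: "continuous_on {0..1} f" and ffix: "\<forall>t\<in>{0..1}. f t = G_op n a c d \<beta> f t"
begin

lemma al_Suc: "k \<ge> 1 \<Longrightarrow> alpha_pt a (Suc k) = alpha_pt a k + a k"
  unfolding alpha_pt_def by (simp add: sum.op_ivl_Suc)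

lemma al_0: "alpha_pt a 0 = 0" by (simp add: alpha_pt_def)
lemma al_1: "alpha_pt a 1 = 0" by (simp add: alpha_pt_def)
lemma al_S0: "alpha_pt a (Suc 0) = 0" by (simp add: alpha_pt_def)
lemma al_end: "alpha_pt a (Suc n) = 1"
  unfolding alpha_pt_def using asum by (simp add: atLeastLessThanSuc_atLeastAtMost)

lemma al_mono: "j \<le> k \<Longrightarrow> k \<le> Suc n \<Longrightarrow> alpha_pt a j \<le> alpha_pt a k"
  unfolding alpha_pt_def
proof (rule sum_mono2)
  fix b assume "j \<le> k" "k \<le> Suc n" "b \<in> {1..<k} - {1..<j}"
  then have "b \<in> {1..n}" by auto
  then have "a b > 0" using apos by blast
  then show "0 \<le> a b" by simp
qed auto

lemma al_strict: "1 \<le> k \<Longrightarrow> k \<le> n \<Longrightarrow> alpha_pt a k < alpha_pt a (Suc k)"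
  using al_Suc apos by force

lemma al_range: "k \<le> Suc n \<Longrightarrow> 0 \<le> alpha_pt a k \<and> alpha_pt a k \<le> 1"
  using al_mono[of 0 k] al_mono[of k "Suc n"] al_end al_0 by auto

lemma Iint_sub: "k \<in> {1..n} \<Longrightarrow> I_int a k \<subseteq> {alpha_pt a k..alpha_pt a (Suc k)}"
  by (auto simp: I_int_def al_1 al_S0 numeral_2_eq_2)

lemma I_disj: assumes "j \<in> {1..n}" "k \<in> {1..n}" "j < k" "t \<in> I_int a j" shows "t \<notin> I_int a k"
proof
  assume tk: "t \<in> I_int a k"
  have "t \<le> alpha_pt a (Suc j)" using Iint_sub[OF assms(1)] assms(4) by auto
  also have "\<dots> \<le> alpha_pt a k" using al_mono[of "Suc j" k] assms by auto
  finally show False using tk assms by (auto simp: I_int_def)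
qed

lemma collapse: assumes "k \<in> {1..n}" "t \<in> I_int a k"
  shows "G_op n a c d \<beta> h t = d k * h (S_inv a k t) + c k * t + \<beta> k"
proof -
  have "(\<Sum>j=1..n. (d j * h (S_inv a j t) + c j * t + \<beta> j) * indicator (I_int a j) t)
     = (\<Sum>j=1..n. if j = k then d k * h (S_inv a k t) + c k * t + \<beta> k else 0)"
  proof (rule sum.cong)
    fix j assume j: "j \<in> {1..n}"
    have "j \<noteq> k \<Longrightarrow> t \<notin> I_int a j"
      using I_disj[OF j assms(1), of t] I_disj[OF assms(1) j, of t] assms(2) by linarith
    then show "(d j * h (S_inv a j t) + c j * t + \<beta> j) * indicator (I_int a j) t
      = (if j = k then d k * h (S_inv a k t) + c k * t + \<beta> k else 0)"
      using assms(2) by (auto simp: indicator_def)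
  qed simp
  then show ?thesis using assms(1) unfolding G_op_def by (simp add: sum.delta)
qed

lemma Sinv_range: assumes "k \<in> {1..n}" "t \<in> {alpha_pt a k..alpha_pt a (Suc k)}"
  shows "S_inv a k t \<in> {0..1}"
proof -
  have ak: "a k > 0" using apos assms by auto
  have "alpha_pt a (Suc k) = alpha_pt a k + a k" using al_Suc assms by auto
  then show ?thesis using assms ak by (auto simp: S_inv_def divide_le_eq_1)
qed

lemma fclosed: assumes k: "k \<in> {1..n}" and t: "t \<in> {alpha_pt a k..alpha_pt a (Suc k)}"
  shows "f t = d k * f (S_inv a k t) + c k * t + \<beta> k"
proof (cases "k = 1")
  case True
  have "t \<in> I_int a k" using t True by (simp add: I_int_def al_1 al_S0 numeral_2_eq_2)
  moreover have "t \<in> {0..1}" using t al_range[of k] al_range[of "Suc k"] k by auto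
  ultimately show ?thesis using collapse[OF k] ffix by auto
next
  case False
  define S where "S = {alpha_pt a k<..alpha_pt a (Suc k)}"
  have akp: "a k > 0" using apos k by blast
  have lt: "alpha_pt a k < alpha_pt a (Suc k)" using al_strict k by auto
  have cl: "closure S = {alpha_pt a k..alpha_pt a (Suc k)}"
    unfolding S_def using lt by (rule closure_greaterThanAtMost)
  have sub01: "{alpha_pt a k..alpha_pt a (Suc k)} \<subseteq> {0..1}"
    using al_range[of k] al_range[of "Suc k"] k by auto
  have "continuous_on (closure S) (\<lambda>t. f t - (d k * f (S_inv a k t) + c k * t + \<beta> k))"
    unfolding cl
  proof (intro continuous_intros)
    show "continuous_on {alpha_pt a k..alpha_pt a (Suc k)} f"
      using continuous_on_subset[OF fcont sub01] .
    show "continuous_on {alpha_pt a k..alpha_pt a (Suc k)} (\<lambda>x. f (S_inv a k x))"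
      by (rule continuous_on_compose2[OF fcont])
         (use akp in \<open>auto simp: S_inv_def intro!: continuous_intros Sinv_range[OF k, unfolded S_inv_def]\<close>)
  qed
  moreover have "\<And>x. x \<in> S \<Longrightarrow> f x - (d k * f (S_inv a k x) + c k * x + \<beta> k) = 0"
  proof -
    fix x assume x: "x \<in> S"
    have "x \<in> I_int a k" using x False by (simp add: I_int_def S_def)
    moreover have "x \<in> {0..1}" using x sub01 by (auto simp: S_def)
    ultimately show "f x - (d k * f (S_inv a k x) + c k * x + \<beta> k) = 0"
      using collapse[OF k] ffix by auto
  qed
  moreover have "t \<in> closure S" using t cl by simp
  ultimately have "f t - (d k * f (S_inv a k t) + c k * t + \<beta> k) = 0"
    by (rule continuous_constant_on_closure)
  then show ?thesis by simp
qed

lemma Gclosed: assumes h0: "h 0 = f 0" and h1: "h 1 = f 1" and k: "k \<in> {1..n}"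
    and t: "t \<in> {alpha_pt a k..alpha_pt a (Suc k)}"
  shows "G_op n a c d \<beta> h t = d k * h (S_inv a k t) + c k * t + \<beta> k"
proof (cases "t \<in> I_int a k")
  case True then show ?thesis using collapse[OF k] by auto
next
  case False
  have k1: "k \<noteq> 1"
  proof
    assume "k = 1"
    then have "t \<in> I_int a k" using t by (simp add: I_int_def al_S0 numeral_2_eq_2)
    then show False using False by simp
  qed
  have tk: "t = alpha_pt a k" using False t k1 by (auto simp: I_int_def)
  define j where "j = k - 1"
  have j: "j \<in> {1..n}" and kj: "k = Suc j" using k k1 by (auto simp: j_def)
  have ajp: "a j > 0" using apos j by blast
  have akp: "a k > 0" using apos k by blast
  have tj: "t \<in> I_int a j"
  proof (cases "j = 1")
    case True then show ?thesis using tk kj al_range[of 2] n2 by (simp add: I_int_def numeral_2_eq_2)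
  next
    case False then show ?thesis using tk kj al_strict[of j] j by (simp add: I_int_def)
  qed
  have s1: "S_inv a j t = 1" using tk kj al_Suc[of j] j ajp by (auto simp: S_inv_def)
  have s0: "S_inv a k t = 0" using tk by (simp add: S_inv_def)
  have t01: "t \<in> {0..1}" using tk al_range[of k] k by auto
  have "G_op n a c d \<beta> h t = d j * f 1 + c j * t + \<beta> j"
    using collapse[OF j tj, of h] s1 h1 by simp
  also have "\<dots> = G_op n a c d \<beta> f t" using collapse[OF j tj, of f] s1 by simp
  also have "\<dots> = f t" using ffix t01 by auto
  also have "\<dots> = d k * h (S_inv a k t) + c k * t + \<beta> k"
    using fclosed[OF k t] s0 h0 by simp
  finally show ?thesis .
qed

lemma Gagree: assumes "h 0 = f 0" "h 1 = f 1" "k \<in> {1..n}"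
    "t \<in> {alpha_pt a k..alpha_pt a (Suc k)}" "h (S_inv a k t) = f (S_inv a k t)"
  shows "G_op n a c d \<beta> h t = f t"
  using Gclosed[OF assms(1-4)] fclosed[OF assms(3,4)] assms(5) by simp

lemma cover: assumes "t \<in> {0..1}" shows "\<exists>k\<in>{1..n}. t \<in> {alpha_pt a k..alpha_pt a (Suc k)}"
proof -
  have "\<forall>j. 1 \<le> j \<longrightarrow> j \<le> n \<longrightarrow> t \<le> alpha_pt a (Suc j) \<longrightarrow>
          (\<exists>k\<in>{1..j}. t \<in> {alpha_pt a k..alpha_pt a (Suc k)})"
  proof (intro allI)
    fix j show "1 \<le> j \<longrightarrow> j \<le> n \<longrightarrow> t \<le> alpha_pt a (Suc j) \<longrightarrow>
          (\<exists>k\<in>{1..j}. t \<in> {alpha_pt a k..alpha_pt a (Suc k)})"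
    proof (induction j)
      case 0 then show ?case by simp
    next
      case (Suc j)
      show ?case
      proof (intro impI)
        assume h: "1 \<le> Suc j" "Suc j \<le> n" "t \<le> alpha_pt a (Suc (Suc j))"
        show "\<exists>k\<in>{1..Suc j}. t \<in> {alpha_pt a k..alpha_pt a (Suc k)}"
        proof (cases "j = 0")
          case True then show ?thesis using h assms by (auto simp: al_S0)
        next
          case False
          show ?thesis
          proof (cases "t \<le> alpha_pt a (Suc j)")
            case True then show ?thesis using Suc.IH h False by force
          next
            case F2: False then show ?thesis using h by (intro bexI[of _ "Suc j"]) auto
          qed
        qed
      qed
    qed
  qed
  then show ?thesis using n2 assms al_end by force
qed

lemma chain: assumes loc: "\<And>k x y. k \<in> {1..n} \<Longrightarrow> x \<in> {alpha_pt a k..alpha_pt a (Suc k)}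
      \<Longrightarrow> y \<in> {alpha_pt a k..alpha_pt a (Suc k)} \<Longrightarrow> \<bar>h x - h y\<bar> \<le> B * \<bar>x - y\<bar>"
  and x: "x \<in> {0..1}" and y: "y \<in> {0..1}"
  shows "\<bar>h x - h y\<bar> \<le> B * \<bar>x - y\<bar>"
proof -
  have P: "\<forall>x y. 0 \<le> x \<longrightarrow> x \<le> y \<longrightarrow> y \<le> alpha_pt a (Suc j) \<longrightarrow> j \<le> n \<longrightarrow>
      \<bar>h x - h y\<bar> \<le> B * \<bar>x - y\<bar>" for j
  proof (induction j)
    case 0 show ?case
    proof (intro allI impI)
      fix x y :: real assume "0 \<le> x" "x \<le> y" "y \<le> alpha_pt a (Suc 0)"
      then have "x = y" by (simp add: al_S0)
      then show "\<bar>h x - h y\<bar> \<le> B * \<bar>x - y\<bar>" by simp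
    qed
  next
    case (Suc j)
    show ?case
    proof (intro allI impI)
      fix x y :: real assume h: "0 \<le> x" "x \<le> y" "y \<le> alpha_pt a (Suc (Suc j))" "Suc j \<le> n"
      have k: "Suc j \<in> {1..n}" using h by auto
      show "\<bar>h x - h y\<bar> \<le> B * \<bar>x - y\<bar>"
      proof (cases "y \<le> alpha_pt a (Suc j)")
        case True then show ?thesis using Suc.IH h by auto
      next
        case False
        show ?thesis
        proof (cases "alpha_pt a (Suc j) \<le> x")
          case True then show ?thesis using loc[OF k, of x y] h False by auto
        next
          case F2: False
          have "\<bar>h x - h y\<bar> \<le> \<bar>h x - h (alpha_pt a (Suc j))\<bar> + \<bar>h (alpha_pt a (Suc j)) - h y\<bar>"
            by simp
          also have "\<dots> \<le> B * \<bar>x - alpha_pt a (Suc j)\<bar> + B * \<bar>alpha_pt a (Suc j) - y\<bar>"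
            using Suc.IH[rule_format, of x "alpha_pt a (Suc j)"] h F2
              loc[OF k, of "alpha_pt a (Suc j)" y] False
            by (intro add_mono) auto
          also have "\<dots> = B * \<bar>x - y\<bar>" using F2 False h by (simp add: algebra_simps)
          finally show ?thesis .
        qed
      qed
    qed
  qed
  show ?thesis
  proof (cases "x \<le> y")
    case True then show ?thesis using P[of n] x y al_end n2 by auto
  next
    case False then show ?thesis using P[of n, rule_format, of y x] x y al_end n2
      by (auto simp: abs_minus_commute)
  qed
qed

end
theorem theorem5:
  fixes n :: nat and a c d \<beta> :: "nat \<Rightarrow> real" and f :: "real \<Rightarrow> real"
  assumes "n \<ge> 2"
    and "\<forall>k\<in>{1..n}. a k > 0"
    and "(\<Sum>k=1..n. a k) = 1"
    and "(MAX k\<in>{1..n}. \<bar>d k\<bar>) < 1"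
    and "continuous_on {0..1} f"
    and "\<forall>t\<in>{0..1}. f t = G_op n a c d \<beta> f t"
    and "\<forall>i\<in>{1..n}. \<bar>d i\<bar> < a i"
  shows "(\<forall>\<alpha>. 0 < \<alpha> \<and> \<alpha> \<le> 1 \<longrightarrow> holder_on \<alpha> {0..1} f)
       \<and> (\<exists>C\<ge>0. \<forall>x\<in>{0..1}. \<forall>y\<in>{0..1}. \<bar>f x - f y\<bar> \<le> C * \<bar>x - y\<bar>)"
proof -
  note ctx = assms(1) assms(2) assms(3) assms(5) assms(6)
  define q where "q = (MAX k\<in>{1..n}. \<bar>d k\<bar>)"
  have q1: "q < 1" using assms(4) by (simp add: q_def)
  have dq: "\<bar>d k\<bar> \<le> q" if "k \<in> {1..n}" for k
    unfolding q_def using that by (intro Max_ge) auto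
  have q0: "0 \<le> q" using dq[of 1] assms(1) by force
  have apk: "a k > 0" if "k \<in> {1..n}" for k using assms(2) that by blast
  have dak: "\<bar>d k\<bar> < a k" if "k \<in> {1..n}" for k using assms(7) that by blast
  define r where "r k = \<bar>c k\<bar> * a k / (a k - \<bar>d k\<bar>)" for k
  define B where "B = \<bar>f 1 - f 0\<bar> + (\<Sum>k=1..n. r k)"
  have r0: "0 \<le> r k" if "k \<in> {1..n}" for k
    unfolding r_def using apk[OF that] dak[OF that] by simp
  have rB: "r k \<le> B" if "k \<in> {1..n}" for k
  proof -
    have "r k \<le> (\<Sum>k=1..n. r k)" by (rule member_le_sum) (use that r0 in auto)
    then show ?thesis unfolding B_def by simp
  qed
  have sr0: "0 \<le> (\<Sum>k=1..n. r k)" by (rule sum_nonneg) (use r0 in auto)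
  have B0: "0 \<le> B" unfolding B_def using sr0 by simp
  have Bk: "\<bar>d k\<bar> * B / a k + \<bar>c k\<bar> \<le> B" if k: "k \<in> {1..n}" for k
  proof -
    have ap: "a k > 0" and ad: "a k - \<bar>d k\<bar> > 0" using apk[OF k] dak[OF k] by auto
    have "\<bar>c k\<bar> * a k = r k * (a k - \<bar>d k\<bar>)" unfolding r_def using ad by simp
    also have "\<dots> \<le> B * (a k - \<bar>d k\<bar>)" using rB[OF k] ad by (intro mult_right_mono) auto
    finally have "\<bar>d k\<bar> * B + \<bar>c k\<bar> * a k \<le> B * a k" by (simp add: algebra_simps)
    then show ?thesis using ap by (simp add: field_simps)
  qed
  obtain M where M: "\<forall>t\<in>{0..1}. \<bar>f t\<bar> \<le> M"
  proof -
    have "bounded (f ` {0..1})"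
      by (intro compact_imp_bounded compact_continuous_image assms(5)) simp
    then obtain M where "\<forall>x\<in>f ` {0..1}. norm x \<le> M" by (auto simp: bounded_iff)
    then show ?thesis using that by auto
  qed
  define M0 where "M0 = \<bar>f 0\<bar> + \<bar>f 1 - f 0\<bar> + M"
  have M00: "0 \<le> M0" using M[rule_format, of 0] unfolding M0_def by auto
  define g0 where "g0 t = f 0 + (f 1 - f 0) * t" for t
  define g where "g m = (G_op n a c d \<beta> ^^ m) g0" for m
  have gS: "g (Suc m) = G_op n a c d \<beta> (g m)" for m by (simp add: g_def)
  have inv: "g m 0 = f 0 \<and> g m 1 = f 1 \<and> (\<forall>x\<in>{0..1}. \<forall>y\<in>{0..1}. \<bar>g m x - g m y\<bar> \<le> B * \<bar>x - y\<bar>)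
      \<and> (\<forall>t\<in>{0..1}. \<bar>g m t - f t\<bar> \<le> q ^ m * M0)" for m
  proof (induction m)
    case 0
    have g00: "g 0 = g0" by (simp add: g_def)
    have L: "\<bar>g0 x - g0 y\<bar> \<le> B * \<bar>x - y\<bar>" for x y
    proof -
      have "\<bar>g0 x - g0 y\<bar> = \<bar>f 1 - f 0\<bar> * \<bar>x - y\<bar>"
        unfolding g0_def by (simp add: abs_mult[symmetric] algebra_simps)
      also have "\<dots> \<le> B * \<bar>x - y\<bar>" using sr0 unfolding B_def
        by (intro mult_right_mono) auto
      finally show ?thesis .
    qed
    have U: "\<bar>g0 t - f t\<bar> \<le> M0" if "t \<in> {0..1}" for t
    proof -
      have "\<bar>g0 t - f t\<bar> \<le> \<bar>f 0\<bar> + \<bar>f 1 - f 0\<bar> * \<bar>t\<bar> + \<bar>f t\<bar>"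
        unfolding g0_def by (simp add: abs_mult[symmetric] abs_triangle_ineq4 order_trans[OF abs_triangle_ineq4] abs_triangle_ineq)
      also have "\<dots> \<le> \<bar>f 0\<bar> + \<bar>f 1 - f 0\<bar> * 1 + M"
        using that M by (intro add_mono mult_left_mono) auto
      finally show ?thesis unfolding M0_def by simp
    qed
    show ?case using L U by (simp add: g00 g0_def)
  next
    case (Suc m)
    let ?h = "g m"
    have h0: "?h 0 = f 0" and h1: "?h 1 = f 1" using Suc.IH by auto
    have hL: "\<And>x y. x \<in> {0..1} \<Longrightarrow> y \<in> {0..1} \<Longrightarrow> \<bar>?h x - ?h y\<bar> \<le> B * \<bar>x - y\<bar>"
      using Suc.IH by auto
    have hU: "\<And>t. t \<in> {0..1} \<Longrightarrow> \<bar>?h t - f t\<bar> \<le> q ^ m * M0" using Suc.IH by auto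
    have a1: "a 1 > 0" using apk assms(1) by auto
    have an: "a n > 0" using apk assms(1) by auto
    have G0: "g (Suc m) 0 = f 0"
      unfolding gS
      by (rule Gagree[OF ctx h0 h1, of 1]) (use assms(1) a1 al_range[OF ctx, of 2] in
          \<open>auto simp: S_inv_def al_S0[OF ctx] h0 numeral_2_eq_2\<close>)
    have sn: "S_inv a n 1 = 1"
      using al_Suc[OF ctx, of n] al_end[OF ctx] an assms(1) by (simp add: S_inv_def)
    have G1: "g (Suc m) 1 = f 1"
      unfolding gS
      by (rule Gagree[OF ctx h0 h1, of n]) (use assms(1) al_range[OF ctx, of n] al_end[OF ctx] sn h1 in auto)
    have loc: "\<bar>g (Suc m) x - g (Suc m) y\<bar> \<le> B * \<bar>x - y\<bar>"
      if k: "k \<in> {1..n}" and x: "x \<in> {alpha_pt a k..alpha_pt a (Suc k)}"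
        and y: "y \<in> {alpha_pt a k..alpha_pt a (Suc k)}" for k x y
    proof -
      have ap: "a k > 0" using apk[OF k] .
      have ux: "S_inv a k x \<in> {0..1}" and uy: "S_inv a k y \<in> {0..1}"
        using Sinv_range[OF ctx k x] Sinv_range[OF ctx k y] by auto
      have duv: "\<bar>S_inv a k x - S_inv a k y\<bar> = \<bar>x - y\<bar> / a k"
        using ap by (simp add: S_inv_def diff_divide_distrib[symmetric])
      have "g (Suc m) x - g (Suc m) y = d k * (?h (S_inv a k x) - ?h (S_inv a k y)) + c k * (x - y)"
        unfolding gS Gclosed[OF ctx h0 h1 k x] Gclosed[OF ctx h0 h1 k y] by (simp add: algebra_simps)
      then have "\<bar>g (Suc m) x - g (Suc m) y\<bar> \<le> \<bar>d k\<bar> * \<bar>?h (S_inv a k x) - ?h (S_inv a k y)\<bar> + \<bar>c k\<bar> * \<bar>x - y\<bar>"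
        by (simp add: abs_mult[symmetric] abs_triangle_ineq)
      also have "\<dots> \<le> \<bar>d k\<bar> * (B * (\<bar>x - y\<bar> / a k)) + \<bar>c k\<bar> * \<bar>x - y\<bar>"
        using hL[OF ux uy] duv by (intro add_mono mult_left_mono) auto
      also have "\<dots> = (\<bar>d k\<bar> * B / a k + \<bar>c k\<bar>) * \<bar>x - y\<bar>" by (simp add: algebra_simps)
      also have "\<dots> \<le> B * \<bar>x - y\<bar>" using Bk[OF k] by (intro mult_right_mono) auto
      finally show ?thesis .
    qed
    have L: "\<forall>x\<in>{0..1}. \<forall>y\<in>{0..1}. \<bar>g (Suc m) x - g (Suc m) y\<bar> \<le> B * \<bar>x - y\<bar>"
      using chain[OF ctx, of "g (Suc m)" B] loc by blast
    have U: "\<bar>g (Suc m) t - f t\<bar> \<le> q ^ Suc m * M0" if t: "t \<in> {0..1}" for t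
    proof -
      obtain k where k: "k \<in> {1..n}" and tk: "t \<in> {alpha_pt a k..alpha_pt a (Suc k)}"
        using cover[OF ctx t] by blast
      have u: "S_inv a k t \<in> {0..1}" using Sinv_range[OF ctx k tk] .
      have "g (Suc m) t - f t = d k * (?h (S_inv a k t) - f (S_inv a k t))"
        unfolding gS Gclosed[OF ctx h0 h1 k tk] fclosed[OF ctx k tk] by (simp add: algebra_simps)
      then have "\<bar>g (Suc m) t - f t\<bar> = \<bar>d k\<bar> * \<bar>?h (S_inv a k t) - f (S_inv a k t)\<bar>"
        by (simp add: abs_mult)
      also have "\<dots> \<le> q * (q ^ m * M0)"
        using dq[OF k] hU[OF u] q0 by (intro mult_mono) auto
      finally show ?thesis by simp
    qed
    show ?case using G0 G1 L U by blast
  qed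
  have Lip: "\<bar>f x - f y\<bar> \<le> B * \<bar>x - y\<bar>" if x: "x \<in> {0..1}" and y: "y \<in> {0..1}" for x y
  proof (rule ccontr)
    assume "\<not> ?thesis"
    then have e: "0 < (\<bar>f x - f y\<bar> - B * \<bar>x - y\<bar>) / (2 * M0 + 1)" using M00 by simp
    obtain m where m: "q ^ m < (\<bar>f x - f y\<bar> - B * \<bar>x - y\<bar>) / (2 * M0 + 1)"
      using real_arch_pow_inv[OF e q1] by blast
    have qm: "q ^ m * (2 * M0) \<le> q ^ m * (2 * M0 + 1)" using q0 by (intro mult_left_mono) auto
    have "q ^ m * (2 * M0 + 1) < \<bar>f x - f y\<bar> - B * \<bar>x - y\<bar>"
      using m M00 by (simp add: pos_less_divide_eq)
    moreover have "\<bar>f x - f y\<bar> \<le> \<bar>g m x - f x\<bar> + \<bar>g m x - g m y\<bar> + \<bar>g m y - f y\<bar>" by linarith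
    moreover have "\<bar>g m x - f x\<bar> \<le> q ^ m * M0" "\<bar>g m y - f y\<bar> \<le> q ^ m * M0"
      "\<bar>g m x - g m y\<bar> \<le> B * \<bar>x - y\<bar>" using inv[of m] x y by auto
    ultimately show False using qm by (simp add: algebra_simps)
  qed
  have H: "holder_on \<alpha> {0..1} f" if "0 < \<alpha>" "\<alpha> \<le> 1" for \<alpha>
    unfolding holder_on_def
  proof (intro exI[of _ B] ballI impI)
    fix x y :: real assume x: "x \<in> {0..1}" and y: "y \<in> {0..1}" and xy: "x \<noteq> y"
    have p: "\<bar>x - y\<bar> > 0" using xy by simp
    have pa: "\<bar>x - y\<bar> powr \<alpha> > 0" using p by simp
    have "\<bar>f x - f y\<bar> / \<bar>x - y\<bar> powr \<alpha> \<le> B * \<bar>x - y\<bar> / \<bar>x - y\<bar> powr \<alpha>"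
      using Lip[OF x y] pa by (simp add: divide_right_mono)
    also have "\<dots> = B * \<bar>x - y\<bar> powr (1 - \<alpha>)"
      using p by (simp add: powr_diff)
    also have "\<dots> \<le> B * 1"
      using x y that B0 by (intro mult_left_mono powr_le1) auto
    finally show "\<bar>f x - f y\<bar> / \<bar>x - y\<bar> powr \<alpha> \<le> B" by simp
  qed
  show ?thesis using H Lip B0 by blast
qed

end
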